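(* Let $\phi=\sum_{n=-\infty}^{\infty}a_ne_n\in L^\infty$ and suppose $V_\phi^*$ is an isometry on $H^2$. Then $\sum_{n=-\infty}^{\infty}|a_n|^2=1$.
   Context: $L^2=L^2(\mathbb{T})$ with orthonormal basis $e_n(z)=z^n$, $n\in\mathbb{Z}$; $H^2$ is the closed span of $\{e_n\}_{n\ge0}$, $P:L^2\to H^2$ the orthogonal projection, $M_\phi$ multiplication by $\phi$. $W:L^2\to L^2$: $We_n=e_{n/2}$ for $n$ even, $0$ for $n$ odd. $K:H^2\to L^2$: $Ke_{2n}=e_n$, $Ke_{2n+1}=e_{-n-1}$ ($n\ge0$). The slant H-Toeplitz operator is $V_\phi=WPM_\phi K:H^2\to H^2$. *)

theory Defs
  imports "HOL-Analysis.Analysis"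
begin

text \<open>The circle is parametrised by t in [0, 2 pi] via cis t; Lebesgue measure normalised by 1/(2 pi).
  Elements of L2 are represented by their coefficient sequences w.r.t. the orthonormal basis e_n
  (int \<Rightarrow> complex, square summable); elements of H2 by nat \<Rightarrow> complex.\<close>

definition circ_Linf :: "(complex \<Rightarrow> complex) \<Rightarrow> bool" where
  "circ_Linf \<phi> \<longleftrightarrow>
     (\<lambda>t. \<phi> (cis t)) \<in> borel_measurable (restrict_space lborel {0..2*pi}) \<and>
     (\<exists>C. AE t in lborel. t \<in> {0..2*pi} \<longrightarrow> cmod (\<phi> (cis t)) \<le> C)"

definition fourier_coeff :: "(complex \<Rightarrow> complex) \<Rightarrow> int \<Rightarrow> complex" where
  "fourier_coeff \<phi> n =
     (1 / (2*pi)) *\<^sub>R (LINT t:{0..2*pi}|lborel. \<phi> (cis t) * cis (- (of_int n * t)))"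

definition l2Z :: "(int \<Rightarrow> complex) set" where
  "l2Z = {f. (\<lambda>n. (cmod (f n))\<^sup>2) summable_on UNIV}"

definition H2 :: "(nat \<Rightarrow> complex) set" where
  "H2 = {f. (\<lambda>n. (cmod (f n))\<^sup>2) summable_on UNIV}"

definition h2_inner :: "(nat \<Rightarrow> complex) \<Rightarrow> (nat \<Rightarrow> complex) \<Rightarrow> complex" where
  "h2_inner f g = infsum (\<lambda>n. f n * cnj (g n)) UNIV"

definition h2_norm :: "(nat \<Rightarrow> complex) \<Rightarrow> real" where
  "h2_norm f = sqrt (infsum (\<lambda>n. (cmod (f n))\<^sup>2) UNIV)"

text \<open>K e_{2n} = e_n, K e_{2n+1} = e_{-n-1}, on coefficients.\<close>
definition K_op :: "(nat \<Rightarrow> complex) \<Rightarrow> (int \<Rightarrow> complex)" where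
  "K_op f j = (if j \<ge> 0 then f (nat (2*j)) else f (nat (-2*j - 1)))"

text \<open>Multiplication by phi = sum a_n e_n, on coefficients (convolution).\<close>
definition M_op :: "(int \<Rightarrow> complex) \<Rightarrow> (int \<Rightarrow> complex) \<Rightarrow> (int \<Rightarrow> complex)" where
  "M_op a g n = infsum (\<lambda>k. a (n - k) * g k) UNIV"

definition P_op :: "(int \<Rightarrow> complex) \<Rightarrow> (int \<Rightarrow> complex)" where
  "P_op g n = (if n \<ge> 0 then g n else 0)"

text \<open>W e_n = e_{n/2} for n even, 0 for n odd, on coefficients.\<close>
definition W_op :: "(int \<Rightarrow> complex) \<Rightarrow> (int \<Rightarrow> complex)" where
  "W_op g n = g (2*n)"

definition slant_HT :: "(int \<Rightarrow> complex) \<Rightarrow> (nat \<Rightarrow> complex) \<Rightarrow> (nat \<Rightarrow> complex)" where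
  "slant_HT a f = (\<lambda>m. W_op (P_op (M_op a (K_op f))) (int m))"

definition adjoint_H2 :: "((nat \<Rightarrow> complex) \<Rightarrow> (nat \<Rightarrow> complex)) \<Rightarrow> (nat \<Rightarrow> complex) \<Rightarrow> (nat \<Rightarrow> complex)" where
  "adjoint_H2 T g = (THE h. h \<in> H2 \<and> (\<forall>f\<in>H2. h2_inner (T f) g = h2_inner f h))"

definition isometry_H2 :: "((nat \<Rightarrow> complex) \<Rightarrow> (nat \<Rightarrow> complex)) \<Rightarrow> bool" where
  "isometry_H2 S \<longleftrightarrow> (\<forall>g\<in>H2. S g \<in> H2 \<and> h2_norm (S g) = h2_norm g)"

end

theory Submission
  imports Defs
begin

definition Mc :: "real measure" where "Mc = restrict_space lborel {0..2*pi}"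

lemma Mc_finite: "finite_measure Mc"
  unfolding Mc_def
  by (intro finite_measureI) (simp add: space_restrict_space emeasure_restrict_space)

lemma set_int_Mc: "(LINT t:{0..2*pi}|lborel. f t) = integral\<^sup>L Mc (f :: real \<Rightarrow> complex)"
  unfolding Mc_def set_lebesgue_integral_def
  by (rule sym, subst integral_restrict_space) auto

definition bm :: "(real \<Rightarrow> complex) \<Rightarrow> bool" where
  "bm f \<longleftrightarrow> f \<in> borel_measurable Mc \<and> (\<exists>C. AE t in Mc. norm (f t) \<le> C)"

lemma bm_integrable: "bm f \<Longrightarrow> integrable Mc f"
  unfolding bm_def using finite_measure.integrable_const_bound[OF Mc_finite] by blast

lemma bm_add: "bm f \<Longrightarrow> bm g \<Longrightarrow> bm (\<lambda>t. f t + g t)"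
  unfolding bm_def
proof (elim conjE exE, intro conjI)
  fix C D assume "AE t in Mc. norm (f t) \<le> C" "AE t in Mc. norm (g t) \<le> D"
  then show "\<exists>E. AE t in Mc. norm (f t + g t) \<le> E"
    by (intro exI[of _ "C + D"]) (auto elim!: eventually_mono[OF eventually_conj] intro: norm_triangle_le add_mono)
qed auto

lemma bm_diff: "bm f \<Longrightarrow> bm g \<Longrightarrow> bm (\<lambda>t. f t - g t)"
  unfolding bm_def
proof (elim conjE exE, intro conjI)
  fix C D assume "AE t in Mc. norm (f t) \<le> C" "AE t in Mc. norm (g t) \<le> D"
  then show "\<exists>E. AE t in Mc. norm (f t - g t) \<le> E"
    by (intro exI[of _ "C + D"]) (auto elim!: eventually_mono[OF eventually_conj] intro: norm_triangle_le_diff add_mono)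
qed auto

lemma bm_mult: "bm f \<Longrightarrow> bm g \<Longrightarrow> bm (\<lambda>t. f t * g t)"
  unfolding bm_def
proof (elim conjE exE, intro conjI)
  fix C D assume "AE t in Mc. norm (f t) \<le> C" "AE t in Mc. norm (g t) \<le> D"
  then show "\<exists>E. AE t in Mc. norm (f t * g t) \<le> E"
    by (intro exI[of _ "C * D"]) (auto elim!: eventually_mono[OF eventually_conj] simp: norm_mult intro: mult_mono order_trans[OF norm_ge_zero])
qed auto

lemma bm_cnj: "bm f \<Longrightarrow> bm (\<lambda>t. cnj (f t))"
proof -
  have c: "continuous_on UNIV (\<lambda>x. cnj x)" by (intro continuous_intros)
  show "bm f \<Longrightarrow> bm (\<lambda>t. cnj (f t))"
    unfolding bm_def using borel_measurable_continuous_on[OF c] by auto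
qed

lemma bm_const: "bm (\<lambda>t. c)"
  unfolding bm_def by auto

lemma bm_cis: "bm (\<lambda>t. cis (r * t))"
  unfolding bm_def
proof (intro conjI)
  show "(\<lambda>t. cis (r * t)) \<in> borel_measurable Mc"
  proof -
    have c: "continuous_on UNIV (\<lambda>t. cis (r * t))" by (intro continuous_intros)
    show ?thesis unfolding Mc_def
      by (intro measurable_restrict_space1) (simp add: borel_measurable_continuous_onI[OF c])
  qed
qed auto

lemma bm_sum: "finite F \<Longrightarrow> (\<And>i. i \<in> F \<Longrightarrow> bm (f i)) \<Longrightarrow> bm (\<lambda>t. \<Sum>i\<in>F. f i t)"
  by (induction F rule: finite_induct) (auto intro: bm_add bm_const)

lemma cis_int_integral:
  fixes k :: int
  shows "(LINT t:{0..2*pi}|lborel. cis (of_int k * t)) = (if k = 0 then 2*pi else 0)"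
proof (cases "k = 0")
  case True
  then show ?thesis by (simp add: set_integral_const scaleR_conv_of_real)
next
  case False
  define F where "F t = cis (of_int k * t) / (\<i> * of_int k)" for t
  have "interval_lebesgue_integral lborel (ereal 0) (ereal (2*pi)) (\<lambda>t. cis (of_int k * t)) = F (2*pi) - F 0"
  proof (rule interval_integral_FTC_finite)
    show "continuous_on {min 0 (2 * pi)..max 0 (2 * pi)} (\<lambda>t. cis (real_of_int k * t))"
      by (intro continuous_intros)
    fix x assume "min 0 (2*pi) \<le> x" "x \<le> max 0 (2*pi)"
    have "(F has_derivative (\<lambda>t. t *\<^sub>R cis (of_int k * x))) (at x within {min 0 (2 * pi)..max 0 (2 * pi)})"
      unfolding F_def using False
      by (auto intro!: derivative_eq_intros simp: field_simps scaleR_conv_of_real)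
    then show "(F has_vector_derivative cis (real_of_int k * x)) (at x within {min 0 (2 * pi)..max 0 (2 * pi)})"
      by (simp add: has_vector_derivative_def)
  qed
  also have "F (2*pi) = F 0"
  proof -
    have "cis (of_int k * (2*pi)) = 1"
      using cis_multiple_2pi[of "of_int k"] by (simp add: mult_ac)
    then show ?thesis unfolding F_def by simp
  qed
  finally show ?thesis using False by (simp add: interval_integral_Icc)
qed

lemma cis_Mc: "integral\<^sup>L Mc (\<lambda>t. cis (of_int k * t)) = (if k = 0 then 2*pi else 0)"
  using cis_int_integral[of k] by (simp add: set_int_Mc)

lemma bm_phi: assumes "circ_Linf \<phi>" shows "bm (\<lambda>t. \<phi> (cis t))"
proof -
  from assms obtain C where m: "(\<lambda>t. \<phi> (cis t)) \<in> borel_measurable Mc"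
    and C: "AE t in lborel. t \<in> {0..2*pi} \<longrightarrow> cmod (\<phi> (cis t)) \<le> C"
    unfolding circ_Linf_def Mc_def by blast
  have "AE t in Mc. cmod (\<phi> (cis t)) \<le> C"
    unfolding Mc_def using C by (subst AE_restrict_space_iff) auto
  then show ?thesis using m unfolding bm_def by blast
qed

lemma fc_Mc: "integral\<^sup>L Mc (\<lambda>t. \<phi> (cis t) * cis (- (of_int n * t))) = 2 * pi * fourier_coeff \<phi> n"
  unfolding fourier_coeff_def set_int_Mc by (simp add: scaleR_conv_of_real)

lemma bessel:
  assumes "circ_Linf \<phi>" "finite F"
  shows "(\<Sum>n\<in>F. (cmod (fourier_coeff \<phi> n))\<^sup>2) \<le> Re (integral\<^sup>L Mc (\<lambda>t. \<phi> (cis t) * cnj (\<phi> (cis t)))) / (2*pi)"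
proof -
  define a where "a = fourier_coeff \<phi>"
  define g where "g t = \<phi> (cis t)" for t
  define S where "S t = (\<Sum>n\<in>F. a n * cis (of_int n * t))" for t
  define T where "T = (\<Sum>n\<in>F. a n * cnj (a n))"
  define G where "G = integral\<^sup>L Mc (\<lambda>t. g t * cnj (g t))"
  have bg: "bm g" using bm_phi[OF assms(1)] unfolding g_def .
  have bS: "bm S" unfolding S_def using assms(2) by (intro bm_sum bm_mult bm_const bm_cis)
  have bgc: "\<And>n. bm (\<lambda>t. g t * cis (- (of_int n * t)))"
    using bg bm_cis[of "- of_int n" for n] by (auto intro: bm_mult)
  have I1: "integral\<^sup>L Mc (\<lambda>t. g t * cnj (S t)) = 2 * pi * T"
  proof -
    have "(\<lambda>t. g t * cnj (S t)) = (\<lambda>t. \<Sum>n\<in>F. cnj (a n) * (g t * cis (- (of_int n * t))))"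
      unfolding S_def by (auto simp: cnj_sum sum_distrib_left cis_cnj mult.assoc mult.left_commute)
    then have "integral\<^sup>L Mc (\<lambda>t. g t * cnj (S t)) = (\<Sum>n\<in>F. cnj (a n) * integral\<^sup>L Mc (\<lambda>t. g t * cis (- (of_int n * t))))"
      using bgc by (simp add: integral_sum bm_integrable)
    also have "\<dots> = 2 * pi * T"
      unfolding T_def g_def a_def fc_Mc by (simp add: sum_distrib_left mult_ac)
    finally show ?thesis .
  qed
  have I2: "integral\<^sup>L Mc (\<lambda>t. S t * cnj (g t)) = cnj (2 * pi * T)"
  proof -
    have "(\<lambda>t. S t * cnj (g t)) = (\<lambda>t. cnj (g t * cnj (S t)))" by (auto simp: mult.commute)
    then show ?thesis using I1 by (simp del: complex_cnj_mult)
  qed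
  have I3: "integral\<^sup>L Mc (\<lambda>t. S t * cnj (S t)) = 2 * pi * T"
  proof -
    have "(\<lambda>t. S t * cnj (S t)) = (\<lambda>t. \<Sum>n\<in>F. \<Sum>m\<in>F. (a n * cnj (a m)) * cis (of_int (n - m) * t))"
    proof
      fix t
      have "S t * cnj (S t) = (\<Sum>n\<in>F. \<Sum>m\<in>F. (a n * cis (of_int n * t)) * (cnj (a m) * cis (- (of_int m * t))))"
        unfolding S_def by (simp add: cnj_sum cis_cnj sum_product)
      also have "\<dots> = (\<Sum>n\<in>F. \<Sum>m\<in>F. (a n * cnj (a m)) * cis (of_int (n - m) * t))"
      proof (intro sum.cong refl)
        fix n m
        have "(a n * cis (of_int n * t)) * (cnj (a m) * cis (- (of_int m * t))) = (a n * cnj (a m)) * (cis (of_int n * t) * cis (- (of_int m * t)))"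
          by (simp add: mult_ac)
        also have "\<dots> = (a n * cnj (a m)) * cis (of_int (n - m) * t)"
          by (simp add: cis_mult algebra_simps)
        finally show "(a n * cis (of_int n * t)) * (cnj (a m) * cis (- (of_int m * t))) = (a n * cnj (a m)) * cis (of_int (n - m) * t)" .
      qed
      finally show "S t * cnj (S t) = (\<Sum>n\<in>F. \<Sum>m\<in>F. (a n * cnj (a m)) * cis (of_int (n - m) * t))" .
    qed
    then have "integral\<^sup>L Mc (\<lambda>t. S t * cnj (S t)) = (\<Sum>n\<in>F. \<Sum>m\<in>F. (a n * cnj (a m)) * integral\<^sup>L Mc (\<lambda>t. cis (of_int (n - m) * t)))"
      using bm_cis by (simp add: integral_sum bm_integrable)
    also have "\<dots> = (\<Sum>n\<in>F. \<Sum>m\<in>F. (if n = m then 2 * pi * (a n * cnj (a n)) else 0))"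
      unfolding cis_Mc by (intro sum.cong refl) auto
    also have "\<dots> = 2 * pi * T"
      unfolding T_def using assms(2) by (simp add: sum_distrib_left)
    finally show ?thesis .
  qed
  have Treal: "T = of_real (\<Sum>n\<in>F. (cmod (a n))\<^sup>2)"
    unfolding T_def of_real_sum by (intro sum.cong refl) (simp only: complex_norm_square)
  have "(\<lambda>t. (g t - S t) * cnj (g t - S t)) = (\<lambda>t. ((g t * cnj (g t) - g t * cnj (S t)) - S t * cnj (g t)) + S t * cnj (S t))"
    by (auto simp: algebra_simps)
  then have "integral\<^sup>L Mc (\<lambda>t. (g t - S t) * cnj (g t - S t)) = G - 2 * pi * T - cnj (2 * pi * T) + 2 * pi * T"
    unfolding G_def using bg bS I1 I2 I3
    by (simp add: bm_integrable bm_mult bm_cnj bm_diff bm_add)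
  also have "\<dots> = G - of_real (2 * pi * (\<Sum>n\<in>F. (cmod (a n))\<^sup>2))"
    unfolding Treal by simp
  finally have E: "integral\<^sup>L Mc (\<lambda>t. (g t - S t) * cnj (g t - S t)) = G - of_real (2 * pi * (\<Sum>n\<in>F. (cmod (a n))\<^sup>2))" .
  have "(\<lambda>t. (g t - S t) * cnj (g t - S t)) = (\<lambda>t. of_real ((cmod (g t - S t))\<^sup>2))"
    by (simp only: complex_norm_square)
  then have "integral\<^sup>L Mc (\<lambda>t. (g t - S t) * cnj (g t - S t)) = of_real (integral\<^sup>L Mc (\<lambda>t. (cmod (g t - S t))\<^sup>2))"
    by (simp only: integral_complex_of_real)
  moreover have "integral\<^sup>L Mc (\<lambda>t. (cmod (g t - S t))\<^sup>2) \<ge> 0"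
    by (simp add: integral_nonneg_AE)
  ultimately have "Re (integral\<^sup>L Mc (\<lambda>t. (g t - S t) * cnj (g t - S t))) \<ge> 0"
    by simp
  then have "0 \<le> Re G - 2 * pi * (\<Sum>n\<in>F. (cmod (a n))\<^sup>2)" using E by simp
  then show ?thesis unfolding G_def g_def a_def by (simp add: field_simps)
qed


lemma l2_coeff:
  assumes "circ_Linf \<phi>"
  shows "(\<lambda>n. (cmod (fourier_coeff \<phi> n))\<^sup>2) summable_on UNIV"
proof (rule nonneg_bdd_above_summable_on)
  show "bdd_above (sum (\<lambda>n. (cmod (fourier_coeff \<phi> n))\<^sup>2) ` {F. F \<subseteq> UNIV \<and> finite F})"
    using bessel[OF assms] unfolding bdd_above_def by blast
qed auto

definition kk :: "nat \<Rightarrow> int" where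
  "kk j = (if even j then int (j div 2) else - int (j div 2) - 1)"

definition kinv :: "int \<Rightarrow> nat" where
  "kinv k = (if k \<ge> 0 then nat (2*k) else nat (-2*k - 1))"

lemma kk_bij0: "bij_betw kk UNIV UNIV"
proof (rule bij_betwI[where g = kinv])
  fix j :: nat show "kinv (kk j) = j"
    unfolding kk_def kinv_def by (auto elim!: evenE oddE)
next
  fix k :: int show "kk (kinv k) = k"
  proof (cases "k \<ge> 0")
    case True
    then have "kinv k = 2 * nat k" unfolding kinv_def by (simp add: nat_mult_distrib)
    then show ?thesis unfolding kk_def using True by simp
  next
    case False
    then have "kinv k = 2 * nat (- k - 1) + 1" unfolding kinv_def by (simp add: nat_mult_distrib)
    then show ?thesis unfolding kk_def using False by simp
  qed
qed auto

lemma kk_bij: "bij_betw (\<lambda>j. - kk j) UNIV UNIV"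
proof -
  have "bij_betw (\<lambda>k::int. - k) UNIV UNIV"
    by (rule bij_betwI[where g = "\<lambda>k. - k"]) auto
  from bij_betw_trans[OF kk_bij0 this] show ?thesis by (simp add: comp_def)
qed

lemma K_op_kk: "K_op f (kk j) = f j"
proof (cases "even j")
  case True
  then obtain i where "j = 2 * i" by (auto elim!: evenE)
  then show ?thesis unfolding kk_def K_op_def by (simp add: nat_mult_distrib)
next
  case False
  then obtain i where j: "j = 2 * i + 1" by (auto elim!: oddE)
  have "nat (2 * (int i + 1) - 1) = 2 * i + 1" by simp
  then show ?thesis unfolding kk_def K_op_def j by simp
qed

lemma infsum_delta: "infsum (\<lambda>n. if n = j then c else (0::'a::{comm_monoid_add,t2_space})) UNIV = c"
  by (subst infsum_cong_neutral[where T="{j}" and g="\<lambda>_. c"]) auto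

lemma delta_H2: "(\<lambda>n. if n = j then 1 else 0) \<in> H2"
proof -
  have "(\<lambda>n. (cmod (if n = j then 1 else 0))\<^sup>2) summable_on {j}" by simp
  then have "(\<lambda>n. (cmod (if n = j then 1 else 0))\<^sup>2) summable_on (UNIV::nat set)"
    by (rule summable_on_cong_neutral[THEN iffD1, rotated -1]) auto
  then show ?thesis unfolding H2_def by simp
qed

lemma inner_delta: "h2_inner (\<lambda>n. if n = j then 1 else 0) x = cnj (x j)"
proof -
  have "(\<lambda>n. (if n = j then 1 else 0) * cnj (x n)) = (\<lambda>n. if n = j then cnj (x j) else 0)" by auto
  then show ?thesis unfolding h2_inner_def by (simp add: infsum_delta)
qed

lemma inner_delta2: "h2_inner x (\<lambda>n. if n = j then 1 else 0) = x j"
proof -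
  have "(\<lambda>n. x n * cnj (if n = j then 1 else 0)) = (\<lambda>n. if n = j then x j else 0)" by auto
  then show ?thesis unfolding h2_inner_def by (simp add: infsum_delta)
qed

theorem mainTheorem4:
  fixes \<phi> :: "complex \<Rightarrow> complex"
  assumes "circ_Linf \<phi>"
    and "isometry_H2 (adjoint_H2 (slant_HT (fourier_coeff \<phi>)))"
  shows "infsum (\<lambda>n. (cmod (fourier_coeff \<phi> n))\<^sup>2) UNIV = 1"
proof -
  define a where "a = fourier_coeff \<phi>"
  define T where "T = slant_HT a"
  define d0 :: "nat \<Rightarrow> complex" where "d0 = (\<lambda>n. if n = 0 then 1 else 0)"
  define h where "h j = cnj (a (- kk j))" for j
  have l2: "(\<lambda>n. (cmod (a n))\<^sup>2) summable_on UNIV"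
    using l2_coeff[OF assms(1)] unfolding a_def .
  have hsq: "(\<lambda>j. (cmod (h j))\<^sup>2) = (\<lambda>j. (\<lambda>n. (cmod (a n))\<^sup>2) (- kk j))"
    unfolding h_def by simp
  have hH2: "h \<in> H2"
    unfolding H2_def using l2 summable_on_reindex_bij_betw[OF kk_bij, of "\<lambda>n. (cmod (a n))\<^sup>2"]
    by (simp add: hsq)
  have hnorm: "infsum (\<lambda>j. (cmod (h j))\<^sup>2) UNIV = infsum (\<lambda>n. (cmod (a n))\<^sup>2) UNIV"
    unfolding hsq by (rule infsum_reindex_bij_betw[OF kk_bij])
  have d0H2: "d0 \<in> H2" unfolding d0_def by (rule delta_H2)
  have adj: "h2_inner (T f) d0 = h2_inner f h" for f
  proof -
    have "h2_inner (T f) d0 = T f 0" unfolding d0_def by (rule inner_delta2)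
    also have "\<dots> = infsum (\<lambda>k. a (- k) * K_op f k) UNIV"
      unfolding T_def slant_HT_def W_op_def P_op_def M_op_def by simp
    also have "\<dots> = infsum (\<lambda>j. a (- kk j) * K_op f (kk j)) UNIV"
      by (rule infsum_reindex_bij_betw[OF kk_bij0, symmetric])
    also have "\<dots> = h2_inner f h"
      unfolding h2_inner_def h_def by (simp add: K_op_kk mult.commute)
    finally show ?thesis .
  qed
  have uniq: "h' = h" if "h' \<in> H2" "\<forall>f\<in>H2. h2_inner (T f) d0 = h2_inner f h'" for h'
  proof
    fix j
    have "cnj (h' j) = cnj (h j)"
      using that(2) delta_H2[of j] adj[of "\<lambda>n. if n = j then 1 else 0"]
      by (simp add: inner_delta)
    then show "h' j = h j" by simp
  qed
  have A: "adjoint_H2 T d0 = h"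
    unfolding adjoint_H2_def
  proof (rule the_equality)
    show "h \<in> H2 \<and> (\<forall>f\<in>H2. h2_inner (T f) d0 = h2_inner f h)" using hH2 adj by blast
  qed (use uniq in blast)
  have "h2_norm h = h2_norm d0"
    using assms(2) d0H2 A unfolding isometry_H2_def T_def a_def by metis
  also have "h2_norm d0 = 1"
  proof -
    have "(\<lambda>n. (cmod (d0 n))\<^sup>2) = (\<lambda>n. if n = 0 then 1 else 0)" unfolding d0_def by auto
    then show ?thesis unfolding h2_norm_def by (simp add: infsum_delta)
  qed
  finally have "sqrt (infsum (\<lambda>n. (cmod (a n))\<^sup>2) UNIV) = 1"
    unfolding h2_norm_def hnorm .
  then show ?thesis unfolding a_def by simp
qed

end
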